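(* Let $r\ge1$ and let $m_1,\ldots,m_r\ge 2$ be integers. Then for every $n\ge 0$ the coefficient of $q^n$ in the power series $H_{(m_1,\ldots,m_r)}$ is divisible by $\prod_{t=1}^{r}\mathcal{M}(m_t,t)$.
   Context: For $m\ge2$, $U_m$ is the linear operator on $\mathbb{Z}[[q]]$ given by $U_m\big(\sum_{n\ge0}a(n)q^n\big)=\sum_{n\ge0}a(mn)q^n$. Define $H_{\emptyset}:=q/(1-q)$ and recursively $H_{(m_1,\ldots,m_r)}:=U_{m_r}\Big(\frac{1}{1-q}H_{(m_1,\ldots,m_{r-1})}\Big)$ for $r\ge1$. For positive integers $m,t$, $\mathcal{M}(m,t):=\dfrac{m}{\gcd\big(m,\operatorname{lcm}(1,2,\ldots,t)\big)}$. *)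

theory Defs
  imports "HOL-Computational_Algebra.Formal_Power_Series"
begin

definition U_op :: "nat \<Rightarrow> int fps \<Rightarrow> int fps" where
  "U_op m f = Abs_fps (\<lambda>n. fps_nth f (m * n))"

definition div_one_minus_q :: "int fps \<Rightarrow> int fps" where
  "div_one_minus_q f = Abs_fps (\<lambda>n. \<Sum>k\<le>n. fps_nth f k)"

definition H_empty :: "int fps" where
  "H_empty = div_one_minus_q fps_X"

text \<open>H_rev [m_r, ..., m_1] = H_(m_1,...,m_r).\<close>
primrec H_rev :: "nat list \<Rightarrow> int fps" where
  "H_rev [] = H_empty"
| "H_rev (m # ms) = U_op m (div_one_minus_q (H_rev ms))"

definition H :: "nat list \<Rightarrow> int fps" where
  "H ms = H_rev (rev ms)"

definition MM :: "nat \<Rightarrow> nat \<Rightarrow> nat" where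
  "MM m t = m div gcd m (Lcm {1..t})"

end

theory Submission
  imports Defs
begin

definition Dif :: "(nat \<Rightarrow> int) \<Rightarrow> nat \<Rightarrow> int" where
  "Dif f = (\<lambda>n. f (Suc n) - f n)"

definition Dm :: "nat \<Rightarrow> (nat \<Rightarrow> int) \<Rightarrow> nat \<Rightarrow> int" where
  "Dm m f = (\<lambda>n. f (n + m) - f n)"

lemma Dif_S: "Dif (\<lambda>n. \<Sum>i<m. F (n+i)) = (\<lambda>n. \<Sum>i<m. Dif F (n+i))"
  by (simp add: Dif_def sum_subtractf)

lemma Dif_iter_S: "(Dif^^k) (\<lambda>n. \<Sum>i<m. g (n+i)) = (\<lambda>n. \<Sum>i<m. (Dif^^k) g (n+i))"
  by (induction k) (simp_all add: Dif_S)

lemma Dm_S: "Dm m f = (\<lambda>n. \<Sum>i<m. Dif f (n+i))"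
proof
  fix n
  show "Dm m f n = (\<Sum>i<m. Dif f (n+i))"
    by (induction m) (simp_all add: Dm_def Dif_def)
qed

lemma Dif_iter_zero: "(Dif^^k) (\<lambda>_. 0) = (\<lambda>_. 0)"
  by (induction k) (simp_all add: Dif_def)

lemma Dm_iter_zero: "\<forall>f. (Dif^^k) f = (\<lambda>_. 0) \<longrightarrow> ((Dm m)^^k) f = (\<lambda>_. 0)"
proof (induction k)
  case 0
  then show ?case by simp
next
  case (Suc k)
  show ?case
  proof (intro allI impI)
    fix f :: "nat \<Rightarrow> int"
    assume a: "(Dif^^Suc k) f = (\<lambda>_. 0)"
    have "(Dif^^k) (Dm m f) = (\<lambda>n. \<Sum>i<m. (Dif^^k) (Dif f) (n+i))"
      by (simp add: Dm_S Dif_iter_S)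
    also have "\<dots> = (\<lambda>_. 0)"
      using a by (simp add: funpow_Suc_right del: funpow.simps)
    finally have "((Dm m)^^k) (Dm m f) = (\<lambda>_. 0)" using Suc.IH by blast
    then show "((Dm m)^^Suc k) f = (\<lambda>_. 0)"
      by (simp add: funpow_Suc_right del: funpow.simps)
  qed
qed

lemma Dif_iter_comp: "(Dif^^k) (\<lambda>n. f (m*n)) = (\<lambda>n. ((Dm m)^^k) f (m*n))"
  by (induction k) (simp_all add: Dif_def Dm_def algebra_simps)

lemma Dif_iter_comp_zero:
  assumes "(Dif^^k) f = (\<lambda>_. 0)"
  shows "(Dif^^k) (\<lambda>n. f (m*n)) = (\<lambda>_. 0)"
  using Dm_iter_zero[of k m] assms by (simp add: Dif_iter_comp)

lemma Dif_iter_cmult: "(Dif^^k) (\<lambda>n. c * f n) = (\<lambda>n. c * (Dif^^k) f n)"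
  by (induction k) (simp_all add: Dif_def algebra_simps)

lemma Dif_iter_shift: "(Dif^^k) (\<lambda>n. f (Suc n)) = (\<lambda>n. (Dif^^k) f (Suc n))"
  by (induction k) (simp_all add: Dif_def)

lemma newton: "\<forall>f. f n = (\<Sum>j\<le>n. int (n choose j) * (Dif^^j) f 0)"
proof (induction n)
  case 0
  then show ?case by simp
next
  case (Suc n)
  show ?case
  proof
    fix f :: "nat \<Rightarrow> int"
    define a where "a j = (Dif^^j) f 0" for j
    have e1: "f n = (\<Sum>j\<le>n. int (n choose j) * a j)" using Suc.IH by (simp add: a_def)
    have e2: "Dif f n = (\<Sum>j\<le>n. int (n choose j) * a (Suc j))"
      using spec[OF Suc.IH, of "Dif f"] a_def
      by (simp add: funpow_Suc_right del: funpow.simps)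
    have e3: "(\<Sum>j\<le>n. int (n choose j) * a j) = a 0 + (\<Sum>j\<le>n. int (n choose Suc j) * a (Suc j))"
    proof -
      have "(\<Sum>j\<le>Suc n. int (n choose j) * a j) = (\<Sum>j\<le>n. int (n choose j) * a j)"
        by simp
      moreover have "(\<Sum>j\<le>Suc n. int (n choose j) * a j) = a 0 + (\<Sum>j\<le>n. int (n choose Suc j) * a (Suc j))"
        by (subst sum.atMost_Suc_shift) simp
      moreover have "n choose Suc n = 0" by simp
      ultimately show ?thesis by simp
    qed
    have "f (Suc n) = f n + Dif f n" by (simp add: Dif_def)
    also have "\<dots> = a 0 + (\<Sum>j\<le>n. int (n choose Suc j) * a (Suc j)) + (\<Sum>j\<le>n. int (n choose j) * a (Suc j))"
      using e1 e2 e3 by simp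
    also have "\<dots> = a 0 + (\<Sum>j\<le>n. int (Suc n choose Suc j) * a (Suc j))"
      by (simp add: sum.distrib[symmetric] algebra_simps)
    also have "\<dots> = (\<Sum>j\<le>Suc n. int (Suc n choose j) * a j)"
      by (subst sum.atMost_Suc_shift) simp
    finally show "f (Suc n) = (\<Sum>j\<le>Suc n. int (Suc n choose j) * (Dif^^j) f 0)"
      using a_def by simp
  qed
qed

lemma newton_deg:
  assumes "(Dif^^Suc d) f = (\<lambda>_. 0)"
  shows "f n = (\<Sum>j\<le>d. int (n choose j) * (Dif^^j) f 0)"
proof -
  have z: "(Dif^^j) f = (\<lambda>_. 0)" if "j > d" for j
  proof -
    have "j = (j - Suc d) + Suc d" using that by simp
    then have "(Dif^^j) f = (Dif^^(j - Suc d)) ((Dif^^Suc d) f)"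
      by (metis comp_apply funpow_add)
    then show ?thesis using assms Dif_iter_zero by simp
  qed
  have "f n = (\<Sum>j\<le>n. int (n choose j) * (Dif^^j) f 0)" using newton by blast
  also have "\<dots> = (\<Sum>j\<le>n+d. int (n choose j) * (Dif^^j) f 0)"
    by (rule sum.mono_neutral_left) auto
  also have "\<dots> = (\<Sum>j\<le>d. int (n choose j) * (Dif^^j) f 0)"
    by (rule sum.mono_neutral_right) (auto simp: z)
  finally show ?thesis .
qed

lemma MM_dvd_choose:
  assumes "m \<ge> 1" "1 \<le> j" "j \<le> d"
  shows "MM m d dvd (m*n choose j)"
proof -
  define C where "C = m*n choose j"
  define g where "g = gcd m (Lcm {1..d})"
  have "m dvd j * C"
  proof (cases "m*n = 0")
    case True
    then show ?thesis using assms C_def by (cases j) auto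
  next
    case False
    have "j * C = m*n * ((m*n - 1) choose (j - 1))"
      using times_binomial_minus1_eq[of j "m*n"] assms C_def by simp
    then show ?thesis by simp
  qed
  then have "m dvd gcd (m*C) (j*C)" by simp
  moreover have "gcd (m*C) (j*C) = C * gcd m j"
    using gcd_mult_distrib_nat[of C m j] by (simp add: ac_simps)
  ultimately have "m dvd C * gcd m j" by simp
  moreover have "gcd m j dvd g"
  proof -
    have "j dvd Lcm {1..d}" using assms by (simp add: dvd_Lcm)
    then show ?thesis unfolding g_def by (meson dvd_trans gcd_dvd1 gcd_dvd2 gcd_greatest)
  qed
  ultimately have "m dvd C * g" by (meson dvd_trans mult_dvd_mono dvd_refl)
  moreover have "m = MM m d * g" unfolding MM_def g_def by simp
  moreover have "g > 0" unfolding g_def using assms by simp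
  ultimately have "MM m d * g dvd C * g" by simp
  then show ?thesis unfolding C_def using \<open>g > 0\<close> by simp
qed

lemma key:
  assumes "(Dif^^Suc d) h = (\<lambda>_. 0)" "h 0 = 0" "m \<ge> 1"
  shows "int (MM m d) dvd h (m*n)"
proof -
  have "h (m*n) = (\<Sum>j\<le>d. int (m*n choose j) * (Dif^^j) h 0)"
    using newton_deg[OF assms(1)] by blast
  also have "int (MM m d) dvd \<dots>"
  proof (rule dvd_sum)
    fix j assume j: "j \<in> {..d}"
    show "int (MM m d) dvd int (m*n choose j) * (Dif^^j) h 0"
    proof (cases "j = 0")
      case True then show ?thesis using assms by simp
    next
      case False
      then have "MM m d dvd (m*n choose j)" using MM_dvd_choose assms j by simp
      then show ?thesis by (simp add: int_dvd_int_iff)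
    qed
  qed
  finally show ?thesis .
qed


definition PP :: "nat list \<Rightarrow> nat" where
  "PP ms = (\<Prod>t=1..length ms. MM (ms ! (t - 1)) t)"

lemma PP_snoc: "PP (ms @ [m]) = PP ms * MM m (Suc (length ms))"
proof -
  have "PP (ms @ [m]) = (\<Prod>t=1..length ms. MM ((ms@[m]) ! (t - 1)) t) * MM m (Suc (length ms))"
    unfolding PP_def by (simp add: nth_append)
  also have "(\<Prod>t=1..length ms. MM ((ms@[m]) ! (t - 1)) t) = PP ms"
    unfolding PP_def by (rule prod.cong) (auto simp: nth_append)
  finally show ?thesis .
qed

lemma H_snoc: "H (ms @ [m]) = U_op m (div_one_minus_q (H ms))"
  by (simp add: H_def)

lemma sum_ind: "(\<Sum>k\<le>n. (if k \<ge> 1 then 1 else 0 :: int)) = int n"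
  by (induction n) auto

lemma G_nil: "fps_nth (div_one_minus_q (H [])) n = int n"
proof -
  have a: "(\<Sum>i\<le>k. (if i = 1 then 1 else 0 :: int)) = (if k \<ge> 1 then 1 else 0)" for k :: nat
    by (induction k) auto
  have "fps_nth (div_one_minus_q (H [])) n = (\<Sum>k\<le>n. (if k \<ge> 1 then 1 else 0 :: int))"
    by (simp add: H_def H_empty_def div_one_minus_q_def a)
  then show ?thesis using sum_ind by simp
qed

lemma step:
  assumes h: "(Dif^^Suc d) h = (\<lambda>_. 0)" "h 0 = 0" and m: "m \<ge> 1"
  defines "h' \<equiv> (\<lambda>n. h (m*n) div int (MM m d))"
  shows "\<forall>n. h (m*n) = int (MM m d) * h' n" "(Dif^^Suc d) h' = (\<lambda>_. 0)" "h' 0 = 0"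
proof -
  show e: "\<forall>n. h (m*n) = int (MM m d) * h' n"
    using key[OF h m] unfolding h'_def by simp
  have pos: "MM m d > 0" unfolding MM_def using m
    by (simp add: div_greater_zero_iff gcd_le1_nat)
  have ee: "(\<lambda>n. h (m*n)) = (\<lambda>n. int (MM m d) * h' n)" using e by simp
  have "(\<lambda>n. int (MM m d) * (Dif^^Suc d) h' n) = (Dif^^Suc d) (\<lambda>n. h (m*n))"
    unfolding ee by (rule Dif_iter_cmult[symmetric])
  also have "\<dots> = (\<lambda>_. 0)" using Dif_iter_comp_zero[OF h(1)] .
  finally show "(Dif^^Suc d) h' = (\<lambda>_. 0)" using pos
    by (metis (mono_tags, lifting) mult_eq_0_iff of_nat_0_less_iff less_irrefl)
  show "h' 0 = 0" using h unfolding h'_def by simp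
qed

lemma inv:
  "(\<forall>x\<in>set ms. x \<ge> 1) \<Longrightarrow> \<exists>h. (Dif^^(length ms + 2)) h = (\<lambda>_. 0) \<and> h 0 = 0 \<and>
      (\<forall>n. fps_nth (div_one_minus_q (H ms)) n = int (PP ms) * h n)"
proof (induction ms rule: rev_induct)
  case Nil
  have "Dif (Dif (\<lambda>n. int n)) = (\<lambda>_. 0)"
    by (simp add: Dif_def)
  then show ?case using G_nil by (intro exI[of _ "\<lambda>n. int n"]) (simp add: PP_def numeral_2_eq_2)
next
  case (snoc m ms)
  then obtain h where h: "(Dif^^Suc (Suc (length ms))) h = (\<lambda>_. 0)" "h 0 = 0"
      "\<forall>n. fps_nth (div_one_minus_q (H ms)) n = int (PP ms) * h n" by auto
  have m: "m \<ge> 1" using snoc by simp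
  define M where "M = MM m (Suc (length ms))"
  define h' where "h' = (\<lambda>n. h (m*n) div int M)"
  note st = step[OF h(1,2) m, folded M_def, folded h'_def]
  define h'' where "h'' = (\<lambda>n. \<Sum>k\<le>n. h' k)"
  have "(Dif^^(length (ms@[m]) + 2)) h'' = (Dif^^Suc (Suc (length ms))) (Dif h'')"
    by (simp add: funpow_Suc_right del: funpow.simps)
  also have "Dif h'' = (\<lambda>n. h' (Suc n))" by (simp add: Dif_def h''_def)
  also have "(Dif^^Suc (Suc (length ms))) (\<lambda>n. h' (Suc n)) = (\<lambda>_. 0)"
    using st(2) by (simp only: Dif_iter_shift)
  finally have d: "(Dif^^(length (ms@[m]) + 2)) h'' = (\<lambda>_. 0)" .
  have "fps_nth (div_one_minus_q (H (ms@[m]))) n = int (PP (ms@[m])) * h'' n" for n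
  proof -
    have "fps_nth (div_one_minus_q (H (ms@[m]))) n = (\<Sum>k\<le>n. int (PP ms) * h (m*k))"
    proof -
      have "fps_nth (H (ms@[m])) k = int (PP ms) * h (m*k)" for k
        by (simp only: H_snoc U_op_def fps_nth_Abs_fps h(3)[rule_format])
      then show ?thesis by (simp only: div_one_minus_q_def fps_nth_Abs_fps)
    qed
    also have "\<dots> = (\<Sum>k\<le>n. int (PP ms) * (int M * h' k))"
      using st(1) by (simp add: h'_def)
    also have "\<dots> = int (PP (ms@[m])) * h'' n"
      by (simp add: PP_snoc M_def h''_def sum_distrib_left mult.assoc)
    finally show ?thesis .
  qed
  moreover have "h'' 0 = 0" using st(3) by (simp add: h''_def h'_def)
  ultimately show ?case using d by blast
qed

theorem lemma2p8:
  fixes ms :: "nat list" and n :: nat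
  assumes "length ms \<ge> 1"
    and "\<forall>i<length ms. ms ! i \<ge> 2"
  shows "int (\<Prod>t=1..length ms. MM (ms ! (t - 1)) t) dvd fps_nth (H ms) n"
proof -
  obtain ms0 m where ms: "ms = ms0 @ [m]" using assms(1)
    by (metis One_nat_def le_refl list.size(3) not_less_eq_eq rev_exhaust)
  have all: "\<forall>x\<in>set ms. x \<ge> 1" using assms(2)
    by (metis Suc_1 in_set_conv_nth not_less_eq_eq order_trans le_add2 Suc_eq_plus1)
  then have a0: "\<forall>x\<in>set ms0. x \<ge> 1" and m: "m \<ge> 1" using ms by auto
  obtain h where h: "(Dif^^Suc (Suc (length ms0))) h = (\<lambda>_. 0)" "h 0 = 0"
      "\<forall>n. fps_nth (div_one_minus_q (H ms0)) n = int (PP ms0) * h n"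
    using inv[OF a0] by auto
  have "fps_nth (H ms) n = int (PP ms0) * h (m*n)"
    by (simp only: ms H_snoc U_op_def fps_nth_Abs_fps h(3)[rule_format])
  moreover have "int (MM m (Suc (length ms0))) dvd h (m*n)" using key[OF h(1,2) m] .
  ultimately have "int (PP ms) dvd fps_nth (H ms) n"
    by (simp add: ms PP_snoc)
  then show ?thesis by (simp add: PP_def)
qed

end
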